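(* Let $\mathcal{K}$ be a Hilbert space and let $A$ be a formally normal operator in $\mathcal{K}$. Suppose there exists a normal operator $N$ in $\mathcal{K}$ with spectral measure $E$ such that $$\mathcal{B}(N):=\bigcup_{n\in\mathbb{N}}\mathcal{R}(E(n\mathbb{D}))\subseteq\mathcal{D}(A)$$ and $$\sup_{n\in\mathbb{N}}\|AE(n\mathbb{D})-E(n\mathbb{D})A\|<+\infty.$$ Then $A$ is essentially normal.
   Context: $\mathbb{D}$ is the closed unit disc in $\mathbb{C}$. A closable densely defined operator $A$ is formally normal if $\mathcal{D}(A)\subseteq\mathcal{D}(A^* )$ and $\|A^*f\|=\|Af\|$ for all $f\in\mathcal{D}(A)$; it is normal if moreover $\mathcal{D}(A)=\mathcal{D}(A^* )$; it is essentially normal if its closure $\bar A$ is normal. Products and differences of unbounded operators are taken on natural domains, and $\|S\|$ for a not necessarily everywhere defined operator means $\sup\{\|Sf\|: f\in\mathcal{D}(S),\|f\|\le1\}$. *)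

theory Defs
  imports "HOL-Analysis.Analysis"
begin

class chilbert = banach +
  fixes scaleC :: "complex \<Rightarrow> 'a \<Rightarrow> 'a"
    and cinner :: "'a \<Rightarrow> 'a \<Rightarrow> complex"
  assumes scaleC_of_real: "scaleC (of_real r) x = scaleR r x"
    and scaleC_add_right: "scaleC a (x + y) = scaleC a x + scaleC a y"
    and scaleC_add_left: "scaleC (a + b) x = scaleC a x + scaleC b x"
    and scaleC_scaleC: "scaleC a (scaleC b x) = scaleC (a * b) x"
    and cinner_add_left: "cinner (x + y) z = cinner x z + cinner y z"
    and cinner_scaleC_left: "cinner (scaleC a x) y = cnj a * cinner x y"
    and cinner_commute: "cinner x y = cnj (cinner y x)"
    and norm_cinner: "norm x = sqrt (Re (cinner x x))"

definition is_subspace :: "'a::chilbert set \<Rightarrow> bool" where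
  "is_subspace D \<longleftrightarrow> 0 \<in> D \<and> (\<forall>x\<in>D. \<forall>y\<in>D. x + y \<in> D) \<and> (\<forall>c. \<forall>x\<in>D. scaleC c x \<in> D)"

definition lin_op :: "'a::chilbert set \<Rightarrow> ('a \<Rightarrow> 'a) \<Rightarrow> bool" where
  "lin_op D A \<longleftrightarrow> is_subspace D \<and> (\<forall>x\<in>D. \<forall>y\<in>D. A (x + y) = A x + A y)
      \<and> (\<forall>c. \<forall>x\<in>D. A (scaleC c x) = scaleC c (A x))"

definition densely_defined :: "'a::chilbert set \<Rightarrow> bool" where
  "densely_defined D \<longleftrightarrow> closure D = UNIV"

definition adj_dom :: "'a::chilbert set \<Rightarrow> ('a \<Rightarrow> 'a) \<Rightarrow> 'a set" where
  "adj_dom D A = {g. \<exists>h. \<forall>f\<in>D. cinner (A f) g = cinner f h}"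

definition adj :: "'a::chilbert set \<Rightarrow> ('a \<Rightarrow> 'a) \<Rightarrow> 'a \<Rightarrow> 'a" where
  "adj D A g = (SOME h. \<forall>f\<in>D. cinner (A f) g = cinner f h)"

definition graph :: "'a set \<Rightarrow> ('a \<Rightarrow> 'a) \<Rightarrow> ('a \<times> 'a) set" where
  "graph D A = {(f, A f) | f. f \<in> D}"

definition closable :: "'a::chilbert set \<Rightarrow> ('a \<Rightarrow> 'a) \<Rightarrow> bool" where
  "closable D A \<longleftrightarrow> (\<forall>f g1 g2. (f, g1) \<in> closure (graph D A) \<and> (f, g2) \<in> closure (graph D A) \<longrightarrow> g1 = g2)"

definition closure_dom :: "'a::chilbert set \<Rightarrow> ('a \<Rightarrow> 'a) \<Rightarrow> 'a set" where
  "closure_dom D A = fst ` closure (graph D A)"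

definition closure_op :: "'a::chilbert set \<Rightarrow> ('a \<Rightarrow> 'a) \<Rightarrow> 'a \<Rightarrow> 'a" where
  "closure_op D A f = (THE g. (f, g) \<in> closure (graph D A))"

definition formally_normal :: "'a::chilbert set \<Rightarrow> ('a \<Rightarrow> 'a) \<Rightarrow> bool" where
  "formally_normal D A \<longleftrightarrow> lin_op D A \<and> densely_defined D \<and> closable D A
     \<and> D \<subseteq> adj_dom D A \<and> (\<forall>f\<in>D. norm (adj D A f) = norm (A f))"

definition normal_op :: "'a::chilbert set \<Rightarrow> ('a \<Rightarrow> 'a) \<Rightarrow> bool" where
  "normal_op D A \<longleftrightarrow> formally_normal D A \<and> D = adj_dom D A"

definition essentially_normal :: "'a::chilbert set \<Rightarrow> ('a \<Rightarrow> 'a) \<Rightarrow> bool" where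
  "essentially_normal D A \<longleftrightarrow> normal_op (closure_dom D A) (closure_op D A)"

definition orth_proj :: "('a::chilbert \<Rightarrow> 'a) \<Rightarrow> bool" where
  "orth_proj P \<longleftrightarrow> (\<forall>x y. P (x + y) = P x + P y) \<and> (\<forall>c x. P (scaleC c x) = scaleC c (P x))
     \<and> (\<forall>x. P (P x) = P x) \<and> (\<forall>x y. cinner (P x) y = cinner x (P y))"

definition spectral_measure :: "(complex set \<Rightarrow> 'a::chilbert \<Rightarrow> 'a) \<Rightarrow> bool" where
  "spectral_measure E \<longleftrightarrow>
     (\<forall>S\<in>sets borel. orth_proj (E S)) \<and> E UNIV = id
     \<and> (\<forall>S\<in>sets borel. \<forall>T\<in>sets borel. E (S \<inter> T) = E S \<circ> E T)
     \<and> (\<forall>F. range F \<subseteq> sets borel \<longrightarrow> disjoint_family F \<longrightarrow>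
            (\<forall>f. (\<lambda>n. \<Sum>i<n. E (F i) f) \<longlonglongrightarrow> E (\<Union>i. F i) f))"

text \<open>The scalar measure S \<mapsto> <E(S) f, f> = norm (E S f)^2.\<close>
definition spec_mu :: "(complex set \<Rightarrow> 'a::chilbert \<Rightarrow> 'a) \<Rightarrow> 'a \<Rightarrow> complex measure" where
  "spec_mu E f = measure_of UNIV (sets borel) (\<lambda>S. ennreal ((norm (E S f))\<^sup>2))"

text \<open>E is the spectral measure of N, i.e. N = \<integral> z dE(z):
D(N) = {f. \<integral>|z|^2 d<E f,f> < \<infinity>} and <f, N f> = \<integral> z d<E f, f> for f in D(N)
(N is linear, so by polarization this determines N).\<close>
definition spectral_measure_of ::
  "'a::chilbert set \<Rightarrow> ('a \<Rightarrow> 'a) \<Rightarrow> (complex set \<Rightarrow> 'a \<Rightarrow> 'a) \<Rightarrow> bool" where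
  "spectral_measure_of DN N E \<longleftrightarrow> spectral_measure E \<and> lin_op DN N
     \<and> DN = {f. (\<integral>\<^sup>+ z. ennreal ((cmod z)\<^sup>2) \<partial>spec_mu E f) < \<infinity>}
     \<and> (\<forall>f\<in>DN. cinner f (N f) = (\<integral> z. z \<partial>spec_mu E f))"

end

theory Submission
  imports Defs
begin


lemma scaleC_zero_left[simp]: "scaleC 0 (x::'a::chilbert) = 0"
  using scaleC_of_real[of 0 x] by simp
lemma scaleC_one[simp]: "scaleC 1 (x::'a::chilbert) = x"
  using scaleC_of_real[of 1 x] by simp
lemma scaleC_minus1[simp]: "scaleC (-1) (x::'a::chilbert) = - x"
  using scaleC_of_real[of "-1" x] by simp
lemma scaleC_scaleR: "scaleR r (x::'a::chilbert) = scaleC (of_real r) x"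
  by (simp add: scaleC_of_real)
lemma scaleC_zero_right[simp]: "scaleC c (0::'a::chilbert) = 0"
  using scaleC_add_right[of c 0 0] by simp
lemma scaleC_minus_right: "scaleC c (- x::'a::chilbert) = - scaleC c x"
  using scaleC_add_right[of c x "-x"] minus_unique[of "scaleC c x" "scaleC c (-x)"] by simp
lemma scaleC_diff_right: "scaleC c (x - y::'a::chilbert) = scaleC c x - scaleC c y"
  using scaleC_add_right[of c x "-y"] scaleC_minus_right by simp

lemma cinner_add_right: "cinner (x::'a::chilbert) (y + z) = cinner x y + cinner x z"
  by (metis cinner_add_left cinner_commute complex_cnj_add)
lemma cinner_scaleC_right: "cinner (x::'a::chilbert) (scaleC c y) = c * cinner x y"
  by (metis cinner_commute cinner_scaleC_left complex_cnj_cnj complex_cnj_mult)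
lemma cinner_zero_left[simp]: "cinner 0 (x::'a::chilbert) = 0"
  using cinner_add_left[of 0 0 x] by simp
lemma cinner_zero_right[simp]: "cinner (x::'a::chilbert) 0 = 0"
  using cinner_add_right[of x 0 0] by simp
lemma cinner_minus_left: "cinner (- x::'a::chilbert) y = - cinner x y"
  using cinner_scaleC_left[of "-1" x y] by simp
lemma cinner_minus_right: "cinner (x::'a::chilbert) (- y) = - cinner x y"
  using cinner_scaleC_right[of x "-1" y] by simp
lemma cinner_diff_left: "cinner (x - y::'a::chilbert) z = cinner x z - cinner y z"
  using cinner_add_left[of x "-y" z] cinner_minus_left by simp
lemma cinner_diff_right: "cinner (x::'a::chilbert) (y - z) = cinner x y - cinner x z"
  using cinner_add_right[of x y "-z"] cinner_minus_right by simp
lemma cinner_scaleR_left: "cinner (scaleR r x::'a::chilbert) y = of_real r * cinner x y"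
  by (simp add: scaleC_scaleR cinner_scaleC_left)
lemma cinner_scaleR_right: "cinner (x::'a::chilbert) (scaleR r y) = of_real r * cinner x y"
  by (simp add: scaleC_scaleR cinner_scaleC_right)

lemma cinner_self: "cinner (x::'a::chilbert) x = of_real ((norm x)\<^sup>2)"
proof -
  have im: "Im (cinner x x) = 0" using cinner_commute[of x x]
    by (metis Im_complex_of_real Reals_cnj_iff complex_is_Real_iff)
  have "Re (cinner x x) \<ge> 0"
  proof (rule ccontr)
    assume "\<not> ?thesis" then have "sqrt (Re (cinner x x)) < 0" by simp
    then show False using norm_cinner[of x] norm_ge_zero[of x] by linarith
  qed
  then have "(norm x)\<^sup>2 = Re (cinner x x)" using norm_cinner[of x] by simp
  then show ?thesis using im by (simp add: complex_eq_iff)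
qed

lemma Re_cinner_self: "Re (cinner (x::'a::chilbert) x) = (norm x)\<^sup>2"
  by (simp add: cinner_self)

lemma norm_sq_add: "(norm (x + y::'a::chilbert))\<^sup>2 = (norm x)\<^sup>2 + 2 * Re (cinner x y) + (norm y)\<^sup>2"
proof -
  have "Re (cinner y x) = Re (cinner x y)" using cinner_commute[of y x] by simp
  then show ?thesis
    by (simp add: Re_cinner_self[symmetric] cinner_add_left cinner_add_right)
qed

lemma norm_scaleC: "norm (scaleC c (x::'a::chilbert)) = cmod c * norm x"
proof -
  have "(norm (scaleC c x))\<^sup>2 = Re (c * (cnj c * cinner x x))"
    by (simp only: Re_cinner_self[symmetric] cinner_scaleC_left cinner_scaleC_right)
  also have "c * (cnj c * cinner x x) = (c * cnj c) * cinner x x" by (simp add: mult_ac)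
  also have "\<dots> = of_real ((cmod c)\<^sup>2 * (norm x)\<^sup>2)" by (simp add: complex_norm_square[symmetric] cinner_self)
  also have "Re \<dots> = (cmod c * norm x)\<^sup>2" by (simp add: power_mult_distrib)
  finally show ?thesis by (simp add: power2_eq_iff_nonneg)
qed

lemma Re_cauchy_schwarz: "\<bar>Re (cinner (x::'a::chilbert) y)\<bar> \<le> norm x * norm y"
proof (cases "y = 0")
  case True then show ?thesis by simp
next
  case False
  define R where "R = Re (cinner x y)"
  define n where "n = (norm y)\<^sup>2"
  have n: "n > 0" using False by (simp add: n_def)
  define t where "t = - R / n"
  have "0 \<le> (norm (x + scaleR t y))\<^sup>2" by simp
  also have "\<dots> = (norm x)\<^sup>2 + 2 * t * R + t\<^sup>2 * n"
    by (simp add: norm_sq_add cinner_scaleR_right R_def n_def power_mult_distrib)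
  also have "\<dots> = (norm x)\<^sup>2 - R\<^sup>2 / n" using n
    by (simp add: t_def field_simps power2_eq_square)
  finally have "R\<^sup>2 \<le> (norm x)\<^sup>2 * n" using n by (simp add: field_simps)
  then have "R\<^sup>2 \<le> (norm x * norm y)\<^sup>2" by (simp add: n_def power_mult_distrib)
  then show ?thesis unfolding R_def
    by (metis abs_le_square_iff abs_of_nonneg mult_nonneg_nonneg norm_ge_zero)
qed

lemma Im_eq_Re_cinner: "Im (cinner (x::'a::chilbert) y) = Re (cinner x (scaleC (- \<i>) y))"
  by (simp add: cinner_scaleC_right)

lemma cinner_bound: "cmod (cinner (x::'a::chilbert) y) \<le> norm x * norm y * 2"
proof -
  have 1: "\<bar>Re (cinner x y)\<bar> \<le> norm x * norm y" by (rule Re_cauchy_schwarz)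
  have 2: "\<bar>Im (cinner x y)\<bar> \<le> norm x * norm y"
    using Re_cauchy_schwarz[of x "scaleC (- \<i>) y"] by (simp add: Im_eq_Re_cinner norm_scaleC)
  have "cmod (cinner x y) \<le> \<bar>Re (cinner x y)\<bar> + \<bar>Im (cinner x y)\<bar>" by (rule cmod_le)
  then show ?thesis using 1 2 by linarith
qed

lemma bounded_bilinear_cinner: "bounded_bilinear (cinner :: 'a::chilbert \<Rightarrow> 'a \<Rightarrow> complex)"
proof
  fix a a' b b' :: 'a and r :: real
  show "cinner (a + a') b = cinner a b + cinner a' b" by (rule cinner_add_left)
  show "cinner a (b + b') = cinner a b + cinner a b'" by (rule cinner_add_right)
  show "cinner (scaleR r a) b = scaleR r (cinner a b)" by (simp add: cinner_scaleR_left scaleR_conv_of_real)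
  show "cinner a (scaleR r b) = scaleR r (cinner a b)" by (simp add: cinner_scaleR_right scaleR_conv_of_real)
next
  show "\<exists>K. \<forall>a b::'a. cmod (cinner a b) \<le> norm a * norm b * K"
    using cinner_bound by blast
qed

lemmas tendsto_cinner = bounded_bilinear.tendsto[OF bounded_bilinear_cinner]

lemma parallelogram: "(norm (x + y::'a::chilbert))\<^sup>2 + (norm (x - y))\<^sup>2 = 2 * (norm x)\<^sup>2 + 2 * (norm y)\<^sup>2"
  using norm_sq_add[of x y] norm_sq_add[of x "-y"] by (simp add: cinner_minus_right)

lemma bounded_linear_scaleC: "bounded_linear (scaleC c :: 'a::chilbert \<Rightarrow> 'a)"
proof
  fix x y :: 'a and r :: real
  show "scaleC c (x + y) = scaleC c x + scaleC c y" by (rule scaleC_add_right)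
  show "scaleC c (scaleR r x) = scaleR r (scaleC c x)" by (simp add: scaleC_scaleR scaleC_scaleC mult.commute)
  show "\<exists>K. \<forall>x::'a. norm (scaleC c x) \<le> norm x * K"
    by (rule exI[of _ "cmod c"]) (simp add: norm_scaleC mult.commute)
qed



lemma sub_props:
  assumes "is_subspace (D::'a::chilbert set)"
  shows "0 \<in> D" "x \<in> D \<Longrightarrow> y \<in> D \<Longrightarrow> x + y \<in> D" "x \<in> D \<Longrightarrow> scaleC c x \<in> D"
    "x \<in> D \<Longrightarrow> - x \<in> D" "x \<in> D \<Longrightarrow> y \<in> D \<Longrightarrow> x - y \<in> D" "x \<in> D \<Longrightarrow> scaleR r x \<in> D"
proof -
  show "0 \<in> D" using assms unfolding is_subspace_def by blast
  show "x \<in> D \<Longrightarrow> y \<in> D \<Longrightarrow> x + y \<in> D" using assms unfolding is_subspace_def by blast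
  show sc: "x \<in> D \<Longrightarrow> scaleC c x \<in> D" for c x using assms unfolding is_subspace_def by blast
  show neg: "x \<in> D \<Longrightarrow> - x \<in> D" for x using sc[of x "-1"] by simp
  show "x \<in> D \<Longrightarrow> y \<in> D \<Longrightarrow> x - y \<in> D" using assms neg[of y] unfolding is_subspace_def
    by (metis diff_conv_add_uminus)
  show "x \<in> D \<Longrightarrow> scaleR r x \<in> D" using sc by (simp add: scaleC_scaleR)
qed

lemma lin_props:
  assumes "lin_op D (A::'a::chilbert \<Rightarrow> 'a)"
  shows "A 0 = 0" "x \<in> D \<Longrightarrow> y \<in> D \<Longrightarrow> A (x + y) = A x + A y"
    "x \<in> D \<Longrightarrow> A (scaleC c x) = scaleC c (A x)"
    "x \<in> D \<Longrightarrow> A (- x) = - A x" "x \<in> D \<Longrightarrow> y \<in> D \<Longrightarrow> A (x - y) = A x - A y"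
    "x \<in> D \<Longrightarrow> A (scaleR r x) = scaleR r (A x)"
proof -
  have S: "is_subspace D" using assms unfolding lin_op_def by blast
  have add: "x \<in> D \<Longrightarrow> y \<in> D \<Longrightarrow> A (x + y) = A x + A y" for x y using assms unfolding lin_op_def by blast
  have sc: "x \<in> D \<Longrightarrow> A (scaleC c x) = scaleC c (A x)" for c x using assms unfolding lin_op_def by blast
  show "A 0 = 0" using sc[of 0 0] sub_props(1)[OF S] by simp
  show "x \<in> D \<Longrightarrow> y \<in> D \<Longrightarrow> A (x + y) = A x + A y" by (rule add)
  show "x \<in> D \<Longrightarrow> A (scaleC c x) = scaleC c (A x)" by (rule sc)
  show neg: "x \<in> D \<Longrightarrow> A (- x) = - A x" for x using sc[of x "-1"] by simp
  show "x \<in> D \<Longrightarrow> y \<in> D \<Longrightarrow> A (x - y) = A x - A y"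
    using add[of x "-y"] neg[of y] sub_props(4)[OF S, of y] by simp
  show "x \<in> D \<Longrightarrow> A (scaleR r x) = scaleR r (A x)" using sc by (simp add: scaleC_scaleR)
qed

lemma dense_unique:
  assumes "densely_defined (D::'a::chilbert set)" and "\<forall>f\<in>D. cinner f h1 = cinner f h2"
  shows "h1 = h2"
proof -
  define w where "w = h1 - h2"
  have z: "\<forall>f\<in>D. cinner f w = 0" using assms(2) by (simp add: w_def cinner_diff_right)
  have "w \<in> closure D" using assms(1) unfolding densely_defined_def by simp
  then obtain s where s: "\<forall>n. s n \<in> D" "s \<longlonglongrightarrow> w" using closure_sequential by blast
  have "(\<lambda>n. cinner (s n) w) \<longlonglongrightarrow> cinner w w" by (rule tendsto_cinner[OF s(2) tendsto_const])
  moreover have "(\<lambda>n. cinner (s n) w) = (\<lambda>n. 0)" using s z by simp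
  ultimately have "cinner w w = 0" using LIMSEQ_unique tendsto_const by metis
  then show ?thesis by (simp add: cinner_self w_def)
qed

lemma adj_prop:
  assumes "g \<in> adj_dom D A" "f \<in> D"
  shows "cinner (A f) g = cinner f (adj D A g)"
proof -
  have "\<exists>h. \<forall>f\<in>D. cinner (A f) g = cinner f h" using assms(1) unfolding adj_dom_def by blast
  from someI_ex[OF this] show ?thesis using assms(2) unfolding adj_def by blast
qed

lemma adj_unique:
  assumes "densely_defined D" "\<forall>f\<in>D. cinner (A f) g = cinner f h"
  shows "g \<in> adj_dom D A" "adj D A g = (h::'a::chilbert)"
proof -
  show gd: "g \<in> adj_dom D A" using assms(2) unfolding adj_dom_def by blast
  show "adj D A g = h"
    using dense_unique[OF assms(1)] adj_prop[OF gd] assms(2) by metis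
qed

lemma adj_diff:
  assumes "densely_defined D" "g1 \<in> adj_dom D A" "g2 \<in> adj_dom D A"
  shows "g1 - g2 \<in> adj_dom D A" "adj D A (g1 - g2) = adj D A g1 - adj D A (g2::'a::chilbert)"
proof -
  have "\<forall>f\<in>D. cinner (A f) (g1 - g2) = cinner f (adj D A g1 - adj D A g2)"
    using adj_prop[OF assms(2)] adj_prop[OF assms(3)] by (simp add: cinner_diff_right)
  from adj_unique[OF assms(1) this] show "g1 - g2 \<in> adj_dom D A" "adj D A (g1 - g2) = adj D A g1 - adj D A g2"
    by auto
qed

definition "Gam D A = closure (graph D A)"

lemma graph_in_Gam: "f \<in> D \<Longrightarrow> (f, A f) \<in> Gam D A"
  unfolding Gam_def by (rule closure_subset[THEN subsetD]) (auto simp: graph_def)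

lemma Gam_add:
  assumes "lin_op D (A::'a::chilbert \<Rightarrow> 'a)" "p \<in> Gam D A" "q \<in> Gam D A"
  shows "p + q \<in> Gam D A"
proof -
  have S: "is_subspace D" using assms(1) unfolding lin_op_def by blast
  obtain s where s: "\<forall>n. s n \<in> graph D A" "s \<longlonglongrightarrow> p"
    using assms(2)[unfolded Gam_def closure_sequential] by blast
  obtain t where t: "\<forall>n. t n \<in> graph D A" "t \<longlonglongrightarrow> q"
    using assms(3)[unfolded Gam_def closure_sequential] by blast
  have "\<forall>n. s n + t n \<in> graph D A"
  proof
    fix n
    obtain a where a: "a \<in> D" "s n = (a, A a)" using s(1) unfolding graph_def by blast
    obtain b where b: "b \<in> D" "t n = (b, A b)" using t(1) unfolding graph_def by blast
    have "s n + t n = (a + b, A (a + b))" using a b lin_props(2)[OF assms(1)] by simp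
    moreover have "a + b \<in> D" using a b sub_props(2)[OF S] by blast
    ultimately show "s n + t n \<in> graph D A" unfolding graph_def by blast
  qed
  moreover have "(\<lambda>n. s n + t n) \<longlonglongrightarrow> p + q" using s(2) t(2) by (rule tendsto_add)
  ultimately show ?thesis unfolding Gam_def closure_sequential by (intro exI[of _ "\<lambda>n. s n + t n"] conjI)
qed

lemma Gam_scaleC:
  assumes "lin_op D (A::'a::chilbert \<Rightarrow> 'a)" "(x, y) \<in> Gam D A"
  shows "(scaleC c x, scaleC c y) \<in> Gam D A"
proof -
  have S: "is_subspace D" using assms(1) unfolding lin_op_def by blast
  obtain s where s: "\<forall>n. s n \<in> graph D A" "s \<longlonglongrightarrow> (x, y)"
    using assms(2)[unfolded Gam_def closure_sequential] by blast
  define t where "t n = (scaleC c (fst (s n)), scaleC c (snd (s n)))" for n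
  have "\<forall>n. t n \<in> graph D A"
  proof
    fix n
    obtain a where a: "a \<in> D" "s n = (a, A a)" using s(1) unfolding graph_def by blast
    have "t n = (scaleC c a, A (scaleC c a))" using a lin_props(3)[OF assms(1)] by (simp add: t_def)
    moreover have "scaleC c a \<in> D" using a sub_props(3)[OF S] by blast
    ultimately show "t n \<in> graph D A" unfolding graph_def by blast
  qed
  moreover have "t \<longlonglongrightarrow> (scaleC c x, scaleC c y)" unfolding t_def
    using s(2) by (intro tendsto_Pair bounded_linear.tendsto[OF bounded_linear_scaleC])
      (auto dest: tendsto_fst tendsto_snd)
  ultimately show ?thesis unfolding Gam_def closure_sequential by (intro exI[of _ t] conjI)
qed

lemma Gam_fun:
  assumes "closable D A" "(f, y1) \<in> Gam D A" "(f, y2) \<in> Gam D A" shows "y1 = y2"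
  using assms unfolding closable_def Gam_def by blast

lemma cop_in:
  assumes "closable D A" "f \<in> closure_dom D A"
  shows "(f, closure_op D A f) \<in> Gam D A"
proof -
  obtain y where y: "(f, y) \<in> Gam D A" using assms(2) unfolding closure_dom_def Gam_def by force
  have "closure_op D A f = y" unfolding closure_op_def
  proof (rule the_equality)
    show "(f, y) \<in> closure (graph D A)" using y unfolding Gam_def .
    show "\<And>g. (f, g) \<in> closure (graph D A) \<Longrightarrow> g = y"
      using Gam_fun[OF assms(1) _ y] unfolding Gam_def by blast
  qed
  then show ?thesis using y by simp
qed

lemma cop_eq:
  assumes "closable D A" "(f, y) \<in> Gam D A"
  shows "f \<in> closure_dom D A" "closure_op D A f = y"
proof -
  show fd: "f \<in> closure_dom D A" using assms(2) unfolding closure_dom_def Gam_def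
    by (metis fst_conv image_eqI)
  show "closure_op D A f = y" using Gam_fun[OF assms(1) cop_in[OF assms(1) fd] assms(2)] .
qed

lemma graph_closure_op:
  assumes "closable D A" shows "graph (closure_dom D A) (closure_op D A) = Gam D A"
proof
  show "graph (closure_dom D A) (closure_op D A) \<subseteq> Gam D A"
    using cop_in[OF assms] unfolding graph_def by blast
  show "Gam D A \<subseteq> graph (closure_dom D A) (closure_op D A)"
  proof
    fix p assume p: "p \<in> Gam D A"
    obtain f y where fy: "p = (f, y)" by (cases p)
    show "p \<in> graph (closure_dom D A) (closure_op D A)"
      using cop_eq[OF assms p[unfolded fy]] unfolding fy graph_def by auto
  qed
qed

lemma D_sub_cdom: "D \<subseteq> closure_dom D A"
  unfolding closure_dom_def using graph_in_Gam[of _ D A] unfolding Gam_def by (metis fst_conv image_eqI subsetI)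

lemma cop_on_D: "closable D A \<Longrightarrow> f \<in> D \<Longrightarrow> closure_op D A f = A f"
  using cop_eq(2) graph_in_Gam by metis



lemma fn_parts:
  assumes "formally_normal D (A::'a::chilbert \<Rightarrow> 'a)"
  shows "lin_op D A" "densely_defined D" "closable D A" "D \<subseteq> adj_dom D A"
    "\<And>f. f \<in> D \<Longrightarrow> norm (adj D A f) = norm (A f)" "is_subspace D"
  using assms unfolding formally_normal_def lin_op_def by auto

lemma Gam_seq:
  assumes "(f, y) \<in> Gam D (A::'a::chilbert \<Rightarrow> 'a)"
  obtains a where "\<forall>n. a n \<in> D" "a \<longlonglongrightarrow> f" "(\<lambda>n. A (a n)) \<longlonglongrightarrow> y"
proof -
  obtain s where s: "\<forall>n. s n \<in> graph D A" "s \<longlonglongrightarrow> (f, y)"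
    using assms[unfolded Gam_def closure_sequential] by blast
  have 1: "\<forall>n. fst (s n) \<in> D \<and> snd (s n) = A (fst (s n))"
  proof
    fix n obtain u where "s n = (u, A u)" "u \<in> D" using s(1) unfolding graph_def by blast
    then show "fst (s n) \<in> D \<and> snd (s n) = A (fst (s n))" by simp
  qed
  have 2: "(\<lambda>n. fst (s n)) \<longlonglongrightarrow> f" using tendsto_fst[OF s(2)] by simp
  have "(\<lambda>n. snd (s n)) \<longlonglongrightarrow> y" using tendsto_snd[OF s(2)] by simp
  then have 3: "(\<lambda>n. A (fst (s n))) \<longlonglongrightarrow> y" using 1 by simp
  show ?thesis using that[of "\<lambda>n. fst (s n)"] 1 2 3 by blast
qed

lemma dense_cdom: "densely_defined D \<Longrightarrow> densely_defined (closure_dom D A)"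
  unfolding densely_defined_def using closure_mono[OF D_sub_cdom[of D A]] by blast

lemma adj_closure_aux:
  assumes fn: "formally_normal D (A::'a::chilbert \<Rightarrow> 'a)" and g: "g \<in> adj_dom D A"
  shows "g \<in> adj_dom (closure_dom D A) (closure_op D A)"
    "adj (closure_dom D A) (closure_op D A) g = adj D A g"
proof -
  note P = fn_parts[OF fn]
  have "\<forall>f\<in>closure_dom D A. cinner (closure_op D A f) g = cinner f (adj D A g)"
  proof
    fix f assume f: "f \<in> closure_dom D A"
    obtain a where a: "\<forall>n. a n \<in> D" "a \<longlonglongrightarrow> f" "(\<lambda>n. A (a n)) \<longlonglongrightarrow> closure_op D A f"
      using Gam_seq[OF cop_in[OF P(3) f]] by blast
    have l1: "(\<lambda>n. cinner (A (a n)) g) \<longlonglongrightarrow> cinner (closure_op D A f) g"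
      by (rule tendsto_cinner[OF a(3) tendsto_const])
    have l2: "(\<lambda>n. cinner (a n) (adj D A g)) \<longlonglongrightarrow> cinner f (adj D A g)"
      by (rule tendsto_cinner[OF a(2) tendsto_const])
    have "(\<lambda>n. cinner (A (a n)) g) = (\<lambda>n. cinner (a n) (adj D A g))"
      using adj_prop[OF g] a(1) by auto
    then show "cinner (closure_op D A f) g = cinner f (adj D A g)" using l1 l2 LIMSEQ_unique by metis
  qed
  from adj_unique[OF dense_cdom[OF P(2)] this]
  show "g \<in> adj_dom (closure_dom D A) (closure_op D A)"
    "adj (closure_dom D A) (closure_op D A) g = adj D A g" by auto
qed

lemma adj_closure_dom:
  assumes fn: "formally_normal D (A::'a::chilbert \<Rightarrow> 'a)"
  shows "adj_dom (closure_dom D A) (closure_op D A) = adj_dom D A"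
proof
  show "adj_dom D A \<subseteq> adj_dom (closure_dom D A) (closure_op D A)"
    using adj_closure_aux(1)[OF fn] by blast
  show "adj_dom (closure_dom D A) (closure_op D A) \<subseteq> adj_dom D A"
  proof
    fix g assume "g \<in> adj_dom (closure_dom D A) (closure_op D A)"
    then obtain h where h: "\<forall>f\<in>closure_dom D A. cinner (closure_op D A f) g = cinner f h"
      unfolding adj_dom_def by blast
    have "\<forall>f\<in>D. cinner (A f) g = cinner f h"
      using h D_sub_cdom[of D A] cop_on_D[OF fn_parts(3)[OF fn]] by (metis subsetD)
    then show "g \<in> adj_dom D A" unfolding adj_dom_def by blast
  qed
qed

lemma cdom_adj:
  assumes fn: "formally_normal D (A::'a::chilbert \<Rightarrow> 'a)" and f: "f \<in> closure_dom D A"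
  shows "f \<in> adj_dom D A" "norm (adj D A f) = norm (closure_op D A f)"
proof -
  note P = fn_parts[OF fn]
  obtain a where a: "\<forall>n. a n \<in> D" "a \<longlonglongrightarrow> f" "(\<lambda>n. A (a n)) \<longlonglongrightarrow> closure_op D A f"
    using Gam_seq[OF cop_in[OF P(3) f]] by blast
  define b where "b n = adj D A (a n)" for n
  have ad: "a n \<in> adj_dom D A" for n using a(1) P(4) by blast
  have dist_eq: "dist (b m) (b n) = dist (A (a m)) (A (a n))" for m n
  proof -
    have "b m - b n = adj D A (a m - a n)" unfolding b_def using adj_diff(2)[OF P(2) ad ad] by simp
    then have "norm (b m - b n) = norm (A (a m - a n))"
      using P(5)[of "a m - a n"] sub_props(5)[OF P(6)] a(1) by simp
    then show ?thesis using lin_props(5)[OF P(1)] a(1) by (simp add: dist_norm)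
  qed
  have "Cauchy (\<lambda>n. A (a n))" using a(3) by (rule LIMSEQ_imp_Cauchy)
  then have "Cauchy b" unfolding Cauchy_def dist_eq .
  then obtain h where h: "b \<longlonglongrightarrow> h" using Cauchy_convergent_iff convergent_def by blast
  have "\<forall>u\<in>D. cinner (A u) f = cinner u h"
  proof
    fix u assume u: "u \<in> D"
    have l1: "(\<lambda>n. cinner (A u) (a n)) \<longlonglongrightarrow> cinner (A u) f" by (rule tendsto_cinner[OF tendsto_const a(2)])
    have l2: "(\<lambda>n. cinner u (b n)) \<longlonglongrightarrow> cinner u h" by (rule tendsto_cinner[OF tendsto_const h])
    have "(\<lambda>n. cinner (A u) (a n)) = (\<lambda>n. cinner u (b n))" using adj_prop[OF ad u] b_def by auto
    then show "cinner (A u) f = cinner u h" using l1 l2 LIMSEQ_unique by metis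
  qed
  from adj_unique[OF P(2) this] have fa: "f \<in> adj_dom D A" and fh: "adj D A f = h" by auto
  show "f \<in> adj_dom D A" by (rule fa)
  have n1: "(\<lambda>n. norm (b n)) \<longlonglongrightarrow> norm h" by (rule tendsto_norm[OF h])
  have n2: "(\<lambda>n. norm (A (a n))) \<longlonglongrightarrow> norm (closure_op D A f)" by (rule tendsto_norm[OF a(3)])
  have "(\<lambda>n. norm (b n)) = (\<lambda>n. norm (A (a n)))" using P(5) a(1) b_def by auto
  then show "norm (adj D A f) = norm (closure_op D A f)" using n1 n2 fh LIMSEQ_unique by metis
qed



lemma op_props:
  assumes "orth_proj (P::'a::chilbert \<Rightarrow> 'a)"
  shows "cinner (P x) y = cinner x (P y)" "P (x + y) = P x + P y" "P (scaleR r x) = scaleR r (P x)"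
    "P 0 = 0" "P (x - y) = P x - P y" "norm (P x) \<le> norm x"
proof -
  show sa: "cinner (P x) y = cinner x (P y)" for x y using assms unfolding orth_proj_def by blast
  show add: "P (x + y) = P x + P y" for x y using assms unfolding orth_proj_def by blast
  have sc: "P (scaleC c x) = scaleC c (P x)" for c x using assms unfolding orth_proj_def by blast
  show "P (scaleR r x) = scaleR r (P x)" using sc by (simp add: scaleC_scaleR)
  show "P 0 = 0" using sc[of 0 0] by simp
  have neg: "P (- y) = - P y" for y using sc[of "-1" y] by simp
  show "P (x - y) = P x - P y" using add[of x "-y"] neg by simp
  have idem: "P (P x) = P x" using assms unfolding orth_proj_def by blast
  have "(norm (P x))\<^sup>2 = Re (cinner (P x) (P x))" by (simp add: Re_cinner_self)
  also have "\<dots> = Re (cinner x (P x))" using sa[of x "P x"] idem by simp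
  also have "\<dots> \<le> norm x * norm (P x)" using Re_cauchy_schwarz[of x "P x"] by linarith
  finally have "(norm (P x))\<^sup>2 \<le> norm x * norm (P x)" .
  then show "norm (P x) \<le> norm x"
    by (metis (no_types, lifting) mult_le_cancel_right norm_ge_zero not_le power2_eq_square
        mult_zero_left order.trans)
qed

lemma E_ca:
  assumes "spectral_measure (E::complex set \<Rightarrow> 'a::chilbert \<Rightarrow> 'a)" "range F \<subseteq> sets borel" "disjoint_family F"
  shows "(\<lambda>n. \<Sum>i<n. E (F i) f) \<longlonglongrightarrow> E (\<Union>i. F i) f"
  using assms unfolding spectral_measure_def by blast

lemma E_empty:
  assumes "spectral_measure (E::complex set \<Rightarrow> 'a::chilbert \<Rightarrow> 'a)"
  shows "E {} f = 0"
proof -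
  have "(\<lambda>n. \<Sum>i<n. E ((\<lambda>_. {}) i) f) \<longlonglongrightarrow> E (\<Union>i. (\<lambda>_::nat. {}) i) f"
    by (rule E_ca[OF assms]) (auto simp: disjoint_family_on_def)
  then have l: "(\<lambda>n. real n *\<^sub>R E {} f) \<longlonglongrightarrow> E {} f" by (simp add: sum_constant_scaleR)
  have "(\<lambda>n. real (Suc n) *\<^sub>R E {} f - real n *\<^sub>R E {} f) \<longlonglongrightarrow> E {} f - E {} f"
    by (rule tendsto_diff[OF LIMSEQ_Suc[OF l] l])
  then have "(\<lambda>n. E {} f) \<longlonglongrightarrow> 0" by (simp add: algebra_simps)
  then show ?thesis using LIMSEQ_unique tendsto_const by metis
qed

lemma E_add:
  assumes E: "spectral_measure (E::complex set \<Rightarrow> 'a::chilbert \<Rightarrow> 'a)"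
    and S: "S \<in> sets borel" and T: "T \<in> sets borel" and d: "S \<inter> T = {}"
  shows "E (S \<union> T) f = E S f + E T f"
proof -
  define F where "F i = (if i = 0 then S else if i = Suc 0 then T else {})" for i :: nat
  have r: "range F \<subseteq> sets borel" using S T by (auto simp: F_def)
  have dj: "disjoint_family F" unfolding disjoint_family_on_def F_def using d by auto
  have U: "(\<Union>i. F i) = S \<union> T"
  proof
    show "(\<Union>i. F i) \<subseteq> S \<union> T" by (auto simp: F_def split: if_splits)
    show "S \<union> T \<subseteq> (\<Union>i. F i)" using F_def by (metis UN_upper Un_least iso_tuple_UNIV_I nat.distinct(1))
  qed
  have l: "(\<lambda>n. \<Sum>i<n. E (F i) f) \<longlonglongrightarrow> E (S \<union> T) f"
    using E_ca[OF E r dj, of f] U by simp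
  have ev: "\<forall>n\<ge>2. (\<Sum>i<n. E (F i) f) = E S f + E T f"
  proof (intro allI impI)
    fix n :: nat assume "n \<ge> 2"
    then show "(\<Sum>i<n. E (F i) f) = E S f + E T f"
    proof (induction n rule: dec_induct)
      case base show ?case by (simp add: numeral_2_eq_2 F_def)
    next
      case (step n) then show ?case by (simp add: F_def E_empty[OF E])
    qed
  qed
  have "(\<lambda>n. \<Sum>i<n. E (F i) f) \<longlonglongrightarrow> E S f + E T f"
    by (rule tendsto_eventually) (use ev in \<open>auto simp: eventually_sequentially\<close>)
  then show ?thesis using l LIMSEQ_unique by metis
qed

lemma E_balls:
  assumes E: "spectral_measure (E::complex set \<Rightarrow> 'a::chilbert \<Rightarrow> 'a)"
  shows "(\<lambda>n. E (cball 0 (real (Suc n))) f) \<longlonglongrightarrow> f"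
proof -
  define G where "G i = cball (0::complex) (real i)" for i :: nat
  define F where "F i = (if i = 0 then G 1 else G (Suc i) - G i)" for i
  have Gb: "G i \<in> sets borel" for i unfolding G_def by (rule borel_closed) simp
  have Gm: "i \<le> j \<Longrightarrow> G i \<subseteq> G j" for i j unfolding G_def by (auto simp: mem_cball)
  have r: "range F \<subseteq> sets borel" using Gb by (auto simp: F_def)
  have dj: "disjoint_family F"
    unfolding disjoint_family_on_def
  proof (intro ballI impI)
    fix i j :: nat assume "i \<noteq> j"
    have key: "i < j \<Longrightarrow> F i \<inter> F j = {}" for i j
    proof -
      assume ij: "i < j"
      have "F i \<subseteq> G (Suc i)" by (auto simp: F_def)
      also have "\<dots> \<subseteq> G j" using Gm ij by simp
      finally show ?thesis using ij by (auto simp: F_def)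
    qed
    show "F i \<inter> F j = {}" using key[of i j] key[of j i] \<open>i \<noteq> j\<close> by (metis Int_commute nat_neq_iff)
  qed
  have U: "(\<Union>i. F i) = UNIV"
  proof (intro set_eqI iffI)
    fix z :: complex
    obtain k :: nat where k: "cmod z \<le> real k" using real_arch_simple by blast
    have ex: "\<exists>m. z \<in> G (Suc m)" using k by (intro exI[of _ k]) (auto simp: G_def)
    define m where "m = (LEAST m. z \<in> G (Suc m))"
    have zm: "z \<in> G (Suc m)" unfolding m_def using LeastI_ex[OF ex] .
    show "z \<in> (\<Union>i. F i)"
    proof (cases m)
      case 0 then show ?thesis using zm by (auto simp: F_def)
    next
      case (Suc p)
      have "z \<notin> G (Suc p)" using not_less_Least[of p "\<lambda>m. z \<in> G (Suc m)"] Suc m_def by simp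
      then have "z \<in> F m" using zm Suc by (auto simp: F_def)
      then show ?thesis by blast
    qed
  qed simp
  have l: "(\<lambda>n. \<Sum>i<n. E (F i) f) \<longlonglongrightarrow> f"
    using E_ca[OF E r dj, of f] U E unfolding spectral_measure_def by simp
  have ps: "(\<Sum>i<Suc n. E (F i) f) = E (G (Suc n)) f" for n
  proof (induction n)
    case 0 then show ?case by (simp add: F_def)
  next
    case (Suc n)
    have "G (Suc (Suc n)) = G (Suc n) \<union> (G (Suc (Suc n)) - G (Suc n))" using Gm[of "Suc n" "Suc (Suc n)"] by auto
    then have "E (G (Suc (Suc n))) f = E (G (Suc n)) f + E (G (Suc (Suc n)) - G (Suc n)) f"
      using E_add[OF E Gb sets.Diff[OF Gb Gb], of "Suc n" "Suc (Suc n)" "Suc n" f] by auto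
    then show ?case using Suc by (simp add: F_def)
  qed
  show ?thesis using LIMSEQ_Suc[OF l] unfolding ps G_def .
qed



lemma rearr_aux: "(X::real) \<le> 2 * (a1 + c1) + 2 * (a2 + c2) - 4 * a3 \<Longrightarrow> X \<le> (2*a1 + 2*a2 - 4*a3) + (2*c1 + 2*c2)"
  by (simp add: algebra_simps)

lemma min_lemma:
  fixes \<Gamma> :: "('a::chilbert \<times> 'a) set"
  assumes cl: "closed \<Gamma>" and mid: "\<And>p q. p \<in> \<Gamma> \<Longrightarrow> q \<in> \<Gamma> \<Longrightarrow> scaleR (1/2) (p + q) \<in> \<Gamma>"
    and uv: "\<And>n. (u n, v n) \<in> \<Gamma>" and ug: "u \<longlonglongrightarrow> g" and vM: "\<And>n. norm (v n) \<le> M"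
  shows "\<exists>y. (g, y) \<in> \<Gamma>"
proof -
  define r where "r k = 1 / (real k + 1)" for k :: nat
  have rpos: "r k > 0" for k by (simp add: r_def)
  have rmono: "j \<le> k \<Longrightarrow> r k \<le> r j" for j k by (simp add: r_def frac_le)
  define T where "T k = {p \<in> \<Gamma>. norm (fst p - g) \<le> r k}" for k
  define N where "N k = (\<lambda>p. norm (snd p)) ` T k" for k
  define a where "a k = Inf (N k)" for k
  have Tex: "\<exists>p\<in>T k. norm (snd p) \<le> M" for k
  proof -
    obtain n0 where "\<forall>n\<ge>n0. norm (u n - g) < r k" using ug[unfolded LIMSEQ_iff] rpos by blast
    then have "(u n0, v n0) \<in> T k" using uv unfolding T_def by force
    then show ?thesis using vM by force
  qed
  have Nne: "N k \<noteq> {}" for k using Tex unfolding N_def by blast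
  have Nbdd: "bdd_below (N k)" for k unfolding N_def by (rule bdd_belowI[of _ 0]) auto
  have a1: "p \<in> T k \<Longrightarrow> a k \<le> norm (snd p)" for p k
    unfolding a_def N_def using Nbdd[of k] unfolding N_def by (intro cInf_lower) auto
  have a2: "a k \<le> M" for k using Tex[of k] a1 by force
  have a3: "0 \<le> a k" for k unfolding a_def using Nne[of k] by (intro cInf_greatest) (auto simp: N_def)
  have Tsub: "T (Suc k) \<subseteq> T k" for k using rmono[of k "Suc k"] unfolding T_def by auto
  have a4: "a k \<le> a (Suc k)" for k unfolding a_def
    using Nne[of "Suc k"] Nbdd[of k] Tsub[of k] unfolding N_def by (intro cInf_superset_mono) auto
  define b where "b k = (a k)\<^sup>2" for k
  have binc: "incseq b" unfolding b_def
    by (intro incseq_SucI power_mono a4 a3)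
  have bM: "b k \<le> M\<^sup>2" for k unfolding b_def using a2 a3 by (intro power_mono) auto
  obtain L where "b \<longlonglongrightarrow> L" using incseq_convergent[OF binc] bM by blast
  then have bC: "Cauchy b" using LIMSEQ_imp_Cauchy by blast
  have "\<forall>k. \<exists>p\<in>T k. (norm (snd p))\<^sup>2 < b k + r k"
  proof
    fix k
    have "a k = sqrt (b k)" using a3[of k] unfolding b_def by simp
    then have "a k < sqrt (b k + r k)" using rpos[of k] real_sqrt_less_mono[of "b k" "b k + r k"] by simp
    then obtain z where "z \<in> N k" "z < sqrt (b k + r k)" using cInf_lessD[OF Nne] unfolding a_def by blast
    then obtain p where p: "p \<in> T k" "norm (snd p) < sqrt (b k + r k)" unfolding N_def by blast
    have "b k + r k \<ge> 0" using rpos[of k] unfolding b_def by (simp add: add_nonneg_nonneg less_imp_le)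
    then have h2: "(sqrt (b k + r k))\<^sup>2 = b k + r k" by simp
    have "(norm (snd p))\<^sup>2 < (sqrt (b k + r k))\<^sup>2"
      using p(2) by (intro power_strict_mono) auto
    then have "(norm (snd p))\<^sup>2 < b k + r k" using h2 by linarith
    then show "\<exists>p\<in>T k. (norm (snd p))\<^sup>2 < b k + r k" using p by blast
  qed
  then obtain x where x: "\<And>k. x k \<in> T k" "\<And>k. (norm (snd (x k)))\<^sup>2 < b k + r k" by metis
  have key: "(norm (snd (x j) - snd (x k)))\<^sup>2 \<le> 2 * (b j + r j) + 2 * (b k + r k) - 4 * b (min j k)" for j k
  proof -
    define m where "m = min j k"
    define p where "p = scaleR (1/2) (x j + x k)"
    have pG: "p \<in> \<Gamma>" unfolding p_def using x(1)[of j] x(1)[of k] mid unfolding T_def by blast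
    have "fst p - g = scaleR (1/2) (fst (x j) - g) + scaleR (1/2) (fst (x k) - g)"
      unfolding p_def by (simp add: algebra_simps flip: scaleR_add_left)
    then have "norm (fst p - g) \<le> norm (scaleR (1/2) (fst (x j) - g)) + norm (scaleR (1/2) (fst (x k) - g))"
      using norm_triangle_ineq by (simp only:)
    then have "norm (fst p - g) \<le> (1/2) * norm (fst (x j) - g) + (1/2) * norm (fst (x k) - g)"
      by simp
    also have "\<dots> \<le> (1/2) * r j + (1/2) * r k" using x(1)[of j] x(1)[of k] unfolding T_def by auto
    also have "\<dots> \<le> r m" using rmono[of m j] rmono[of m k] unfolding m_def by auto
    finally have "p \<in> T m" using pG unfolding T_def by blast
    then have "a m \<le> norm (snd p)" by (rule a1)
    then have bm: "b m \<le> (norm (snd p))\<^sup>2" unfolding b_def using a3[of m] by (intro power_mono) auto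
    have sp: "snd p = scaleR (1/2) (snd (x j) + snd (x k))" unfolding p_def by simp
    have "(norm (snd p))\<^sup>2 = (1/4) * (norm (snd (x j) + snd (x k)))\<^sup>2"
      unfolding sp by (simp add: power_mult_distrib power2_eq_square)
    then have "4 * b m \<le> (norm (snd (x j) + snd (x k)))\<^sup>2" using bm by simp
    moreover have "(norm (snd (x j) + snd (x k)))\<^sup>2 + (norm (snd (x j) - snd (x k)))\<^sup>2
        = 2 * (norm (snd (x j)))\<^sup>2 + 2 * (norm (snd (x k)))\<^sup>2" by (rule parallelogram)
    ultimately show ?thesis using x(2)[of j] x(2)[of k] unfolding m_def by argo
  qed
  have vC: "Cauchy (\<lambda>k. snd (x k))"
  proof (rule CauchyI)
    fix e :: real assume e: "e > 0"
    then have e2: "e\<^sup>2 / 8 > 0" by simp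
    obtain K1 where K1: "\<forall>m\<ge>K1. \<forall>n\<ge>K1. norm (b m - b n) < e\<^sup>2 / 8" using CauchyD[OF bC e2] by blast
    obtain K2 :: nat where K2: "inverse (e\<^sup>2 / 8) < real K2" using reals_Archimedean2 by blast
    have "8 / e\<^sup>2 < real K2 + 1" using K2 by (simp add: inverse_eq_divide)
    then have "1 < e\<^sup>2 / 8 * (real K2 + 1)" using e2 by (simp add: field_simps)
    then have rK2: "r K2 < e\<^sup>2 / 8" unfolding r_def by (simp add: field_simps)
    show "\<exists>M. \<forall>m\<ge>M. \<forall>n\<ge>M. norm (snd (x m) - snd (x n)) < e"
    proof (intro exI allI impI)
      fix j k assume j: "j \<ge> max K1 K2" and k: "k \<ge> max K1 K2"
      define m where "m = min j k"
      have mK: "m \<ge> K1" "m \<ge> K2" "j \<ge> K1" "k \<ge> K1" "j \<ge> K2" "k \<ge> K2"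
        using j k unfolding m_def by auto
      have c1: "norm (b j - b m) < e\<^sup>2 / 8" using K1 mK(1,3) by blast
      have c2: "norm (b k - b m) < e\<^sup>2 / 8" using K1 mK(1,4) by blast
      have c1': "b j - b m < e\<^sup>2 / 8" using c1 unfolding real_norm_def by linarith
      have c2': "b k - b m < e\<^sup>2 / 8" using c2 unfolding real_norm_def by linarith
      have r1: "r j \<le> r K2" by (rule rmono[OF mK(5)])
      have r2: "r k \<le> r K2" by (rule rmono[OF mK(6)])
      have s1: "2 * b j + 2 * b k - 4 * b m < e\<^sup>2 / 2" using c1' c2' by linarith
      have s2: "2 * r j + 2 * r k < e\<^sup>2 / 2" using rK2 r1 r2 by linarith
      have "(norm (snd (x j) - snd (x k)))\<^sup>2 \<le> (2 * b j + 2 * b k - 4 * b m) + (2 * r j + 2 * r k)"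
        using rearr_aux[OF key[of j k]] unfolding m_def .
      also have "\<dots> < e\<^sup>2" using s1 s2 by linarith
      finally have "(norm (snd (x j) - snd (x k)))\<^sup>2 < e\<^sup>2" .
      then show "norm (snd (x j) - snd (x k)) < e" using power2_less_imp_less[of "norm (snd (x j) - snd (x k))" e] e by simp
    qed
  qed
  then have "convergent (\<lambda>k. snd (x k))" by (simp add: Cauchy_convergent_iff)
  then obtain y where y: "(\<lambda>k. snd (x k)) \<longlonglongrightarrow> y" unfolding convergent_def by blast
  have "(\<lambda>k. fst (x k) - g) \<longlonglongrightarrow> 0"
  proof (rule Lim_null_comparison)
    have "\<And>k. norm (fst (x k) - g) \<le> r k" using x(1) unfolding T_def by simp
    then show "\<forall>\<^sub>F k in sequentially. norm (fst (x k) - g) \<le> r k" by (intro always_eventually allI)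
    have "r = (\<lambda>n. inverse (real (Suc n)))" unfolding r_def by (rule ext) (simp add: inverse_eq_divide)
    then show "r \<longlonglongrightarrow> 0" using LIMSEQ_inverse_real_of_nat by simp
  qed
  then have "(\<lambda>k. fst (x k) - g + g) \<longlonglongrightarrow> 0 + g" by (rule tendsto_add[OF _ tendsto_const])
  then have xg: "(\<lambda>k. fst (x k)) \<longlonglongrightarrow> g" by simp
  have "(\<lambda>k. (fst (x k), snd (x k))) \<longlonglongrightarrow> (g, y)" by (rule tendsto_Pair[OF xg y])
  moreover have "\<And>k. (fst (x k), snd (x k)) \<in> \<Gamma>" using x(1) unfolding T_def by simp
  ultimately have "(g, y) \<in> \<Gamma>" by (rule closed_sequentially[OF cl, of "\<lambda>k. (fst (x k), snd (x k))", rotated])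
  then show ?thesis by blast
qed



lemma dense_bound:
  assumes "densely_defined (D::'a::chilbert set)" "B \<ge> 0" "\<And>f. f \<in> D \<Longrightarrow> cmod (cinner f w) \<le> B * norm f"
  shows "norm w \<le> B"
proof -
  have "w \<in> closure D" using assms(1) unfolding densely_defined_def by simp
  then obtain s where s: "\<forall>n. s n \<in> D" "s \<longlonglongrightarrow> w" using closure_sequential by blast
  have l1: "(\<lambda>n. cmod (cinner (s n) w)) \<longlonglongrightarrow> cmod (cinner w w)"
    by (intro tendsto_norm tendsto_cinner[OF s(2) tendsto_const])
  have l2: "(\<lambda>n. B * norm (s n)) \<longlonglongrightarrow> B * norm w" by (intro tendsto_mult tendsto_const tendsto_norm s(2))
  have "cmod (cinner w w) \<le> B * norm w"
    using l1 l2 assms(3) s(1) by (intro LIMSEQ_le[OF l1 l2]) (auto intro: exI[of _ 0])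
  then have "(norm w)\<^sup>2 \<le> B * norm w" by (simp add: cinner_self norm_power)
  then show ?thesis using assms(2)
    by (cases "norm w = 0") (auto simp: power2_eq_square mult_le_cancel_right)
qed

lemma adj_sub_cdom:
  fixes D :: "'a::chilbert set" and A :: "'a \<Rightarrow> 'a" and E :: "complex set \<Rightarrow> 'a \<Rightarrow> 'a"
  assumes fn: "formally_normal D A" and sm: "spectral_measure E"
    and inc: "\<And>n x. E (cball 0 (real (Suc n))) x \<in> D"
    and bnd: "\<And>n f. f \<in> D \<Longrightarrow> norm f \<le> 1 \<Longrightarrow>
        norm (A (E (cball 0 (real (Suc n))) f) - E (cball 0 (real (Suc n))) (A f)) \<le> C"
    and g: "g \<in> adj_dom D A"
  shows "g \<in> closure_dom D A"
proof -
  note F = fn_parts[OF fn]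
  define P where "P n = E (cball 0 (real (Suc n)))" for n
  have op: "orth_proj (P n)" for n
    using sm unfolding spectral_measure_def P_def by (simp add: borel_closed)
  note opp = op_props[OF op]
  have PD: "P n x \<in> D" for n x unfolding P_def by (rule inc)
  have "norm (A (P 0 0) - P 0 (A 0)) \<le> C" using bnd[of 0 0] sub_props(1)[OF F(6)] unfolding P_def by simp
  then have C0: "C \<ge> 0" using lin_props(1)[OF F(1)] op_props(4)[OF op[of 0]] by simp
  have bnd2: "norm (A (P n f) - P n (A f)) \<le> C * norm f" if f: "f \<in> D" for n f
  proof (cases "f = 0")
    case True then show ?thesis using lin_props(1)[OF F(1)] opp(4) by simp
  next
    case False
    define c where "c = 1 / norm f"
    have cpos: "c > 0" using False by (simp add: c_def)
    have fD: "scaleR c f \<in> D" using sub_props(6)[OF F(6) f] .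
    have "norm (A (P n (scaleR c f)) - P n (A (scaleR c f))) \<le> C"
      using bnd[OF fD] False unfolding P_def[symmetric] by (simp add: c_def)
    moreover have "A (P n (scaleR c f)) - P n (A (scaleR c f)) = scaleR c (A (P n f) - P n (A f))"
      using opp(3) lin_props(6)[OF F(1)] PD f by (simp add: scaleR_diff_right)
    ultimately have "c * norm (A (P n f) - P n (A f)) \<le> C" using cpos by simp
    then show ?thesis using False by (simp add: c_def field_simps)
  qed
  define M where "M = norm (adj D A g) + 2 * C * norm g"
  have bndA: "norm (A (P n g)) \<le> M" for n
  proof -
    define w where "w = adj D A (P n g) - P n (adj D A g)"
    have "cmod (cinner f w) \<le> (2 * C * norm g) * norm f" if f: "f \<in> D" for f
    proof -
      have e1: "cinner f (adj D A (P n g)) = cinner (P n (A f)) g"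
        using adj_prop[OF F(4)[THEN subsetD, OF PD[of n g]] f] opp(1) by simp
      have e2: "cinner f (P n (adj D A g)) = cinner (A (P n f)) g"
        using adj_prop[OF g PD[of n f]] opp(1) by simp
      have "cinner f w = cinner (P n (A f) - A (P n f)) g"
        unfolding w_def cinner_diff_right cinner_diff_left e1 e2 ..
      then have "cmod (cinner f w) \<le> norm (P n (A f) - A (P n f)) * norm g * 2"
        using cinner_bound by simp
      also have "norm (P n (A f) - A (P n f)) \<le> C * norm f"
        using bnd2[OF f, of n] by (simp add: norm_minus_commute)
      then have "norm (P n (A f) - A (P n f)) * norm g * 2 \<le> C * norm f * norm g * 2"
        by (intro mult_right_mono) auto
      finally show ?thesis by (simp add: mult_ac)
    qed
    then have wb: "norm w \<le> 2 * C * norm g" using dense_bound[OF F(2)] C0 by simp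
    have "norm (A (P n g)) = norm (adj D A (P n g))" using F(5) PD by simp
    also have "adj D A (P n g) = P n (adj D A g) + w" unfolding w_def by simp
    also have "norm \<dots> \<le> norm (P n (adj D A g)) + norm w" by (rule norm_triangle_ineq)
    also have "\<dots> \<le> M" using op_props(6)[OF op[of n], where x="adj D A g"] wb unfolding M_def by linarith
    finally show ?thesis .
  qed
  have cl: "closed (Gam D A)" unfolding Gam_def by simp
  have mid: "scaleR (1/2) (p + q) \<in> Gam D A" if "p \<in> Gam D A" "q \<in> Gam D A" for p q
  proof -
    have pq: "p + q \<in> Gam D A" by (rule Gam_add[OF F(1) that])
    obtain a b where ab: "p + q = (a, b)" by (cases "p + q")
    have "(scaleC (of_real (1/2)) a, scaleC (of_real (1/2)) b) \<in> Gam D A"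
      using Gam_scaleC[OF F(1), of a b "of_real (1/2)"] pq[unfolded ab] .
    then show ?thesis using ab by (simp add: scaleC_scaleR)
  qed
  have uv: "(P n g, A (P n g)) \<in> Gam D A" for n by (rule graph_in_Gam[OF PD])
  have ug: "(\<lambda>n. P n g) \<longlonglongrightarrow> g" unfolding P_def by (rule E_balls[OF sm])
  obtain y where "(g, y) \<in> Gam D A" using min_lemma[OF cl mid uv ug bndA] by blast
  then show ?thesis using cop_eq(1)[OF F(3)] by blast
qed

theorem proposition6:
  fixes D :: "'a::chilbert set" and A :: "'a \<Rightarrow> 'a"
    and DN :: "'a set" and N :: "'a \<Rightarrow> 'a"
    and E :: "complex set \<Rightarrow> 'a \<Rightarrow> 'a"
  assumes "formally_normal D A"
    and "normal_op DN N"
    and "spectral_measure_of DN N E"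
    and "(\<Union>n\<in>{1::nat..}. range (E (cball 0 (real n)))) \<subseteq> D"
    and "\<exists>C::real. \<forall>n::nat. n \<ge> 1 \<longrightarrow>
           (\<forall>f \<in> {f \<in> D. E (cball 0 (real n)) f \<in> D}. norm f \<le> 1 \<longrightarrow>
              norm (A (E (cball 0 (real n)) f) - E (cball 0 (real n)) (A f)) \<le> C)"
  shows "essentially_normal D A"
proof -
  note fn = assms(1)
  note F = fn_parts[OF fn]
  have sm: "spectral_measure E" using assms(3) unfolding spectral_measure_of_def by blast
  have inc: "E (cball 0 (real (Suc n))) x \<in> D" for n x
  proof -
    have "E (cball 0 (real (Suc n))) x \<in> (\<Union>n\<in>{1::nat..}. range (E (cball 0 (real n))))"
      by (rule UN_I[of "Suc n"]) (simp, rule rangeI)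
    then show ?thesis using assms(4) by (rule subsetD[rotated])
  qed
  obtain C where C: "\<forall>n::nat. n \<ge> 1 \<longrightarrow>
           (\<forall>f \<in> {f \<in> D. E (cball 0 (real n)) f \<in> D}. norm f \<le> 1 \<longrightarrow>
              norm (A (E (cball 0 (real n)) f) - E (cball 0 (real n)) (A f)) \<le> C)"
    using assms(5) by blast
  have bnd: "norm (A (E (cball 0 (real (Suc n))) f) - E (cball 0 (real (Suc n))) (A f)) \<le> C"
    if "f \<in> D" "norm f \<le> 1" for n f
  proof -
    have m: "f \<in> {f \<in> D. E (cball 0 (real (Suc n))) f \<in> D}" using that(1) inc[of n f] by blast
    show ?thesis by (rule C[rule_format, of "Suc n" f, OF _ m that(2)]) simp
  qed
  define cd where "cd = closure_dom D A"
  define co where "co = closure_op D A"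
  have in_cd: "(f, y) \<in> Gam D A \<Longrightarrow> f \<in> cd \<and> co f = y" for f y
    using cop_eq[OF F(3)] unfolding cd_def co_def by blast
  have cd_in: "f \<in> cd \<Longrightarrow> (f, co f) \<in> Gam D A" for f using cop_in[OF F(3)] unfolding cd_def co_def by blast
  have sub: "is_subspace cd"
    unfolding is_subspace_def
  proof (intro conjI ballI allI)
    show "0 \<in> cd" using in_cd[OF graph_in_Gam[OF sub_props(1)[OF F(6)]]] by blast
    show "x + y \<in> cd" if "x \<in> cd" "y \<in> cd" for x y
      using in_cd[of "x + y" "co x + co y"] Gam_add[OF F(1) cd_in[OF that(1)] cd_in[OF that(2)]] by simp
    show "scaleC c x \<in> cd" if "x \<in> cd" for c x
      using in_cd[OF Gam_scaleC[OF F(1) cd_in[OF that], of c]] by (rule conjunct1)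
  qed
  have lin: "lin_op cd co" unfolding lin_op_def
  proof (intro conjI ballI allI sub)
    show "co (x + y) = co x + co y" if "x \<in> cd" "y \<in> cd" for x y
      using in_cd[of "x + y" "co x + co y"] Gam_add[OF F(1) cd_in[OF that(1)] cd_in[OF that(2)]] by simp
    show "co (scaleC c x) = scaleC c (co x)" if "x \<in> cd" for c x
      using in_cd[OF Gam_scaleC[OF F(1) cd_in[OF that], of c]] by (rule conjunct2)
  qed
  have dense: "densely_defined cd" unfolding cd_def by (rule dense_cdom[OF F(2)])
  have clos: "closable cd co" unfolding closable_def cd_def co_def graph_closure_op[OF F(3)]
  proof (intro allI impI)
    fix f g1 g2 assume "(f, g1) \<in> closure (Gam D A) \<and> (f, g2) \<in> closure (Gam D A)"
    then have "(f, g1) \<in> Gam D A" "(f, g2) \<in> Gam D A" unfolding Gam_def closure_closure by auto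
    then show "g1 = g2" by (rule Gam_fun[OF F(3)])
  qed
  have adjdom: "adj_dom cd co = adj_dom D A" unfolding cd_def co_def by (rule adj_closure_dom[OF fn])
  have s1: "cd \<subseteq> adj_dom cd co" unfolding adjdom using cdom_adj(1)[OF fn] unfolding cd_def by (rule subsetI)
  have s2: "\<forall>f\<in>cd. norm (adj cd co f) = norm (co f)"
  proof
    fix f assume f: "f \<in> cd"
    have fa: "f \<in> adj_dom D A" using cdom_adj(1)[OF fn] f unfolding cd_def .
    have e1: "adj cd co f = adj D A f" unfolding cd_def co_def by (rule adj_closure_aux(2)[OF fn fa])
    have e2: "norm (adj D A f) = norm (co f)" unfolding co_def by (rule cdom_adj(2)[OF fn f[unfolded cd_def]])
    show "norm (adj cd co f) = norm (co f)" unfolding e1 e2 ..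
  qed
  have s3': "adj_dom D A \<subseteq> closure_dom D A"
  proof
    fix g assume g: "g \<in> adj_dom D A"
    show "g \<in> closure_dom D A"
      using adj_sub_cdom[of D A E C g, OF fn sm inc bnd g] by blast
  qed
  have s3: "adj_dom cd co \<subseteq> cd" unfolding adjdom using s3' by (simp add: cd_def)
  show ?thesis unfolding essentially_normal_def normal_op_def formally_normal_def
    cd_def[symmetric] co_def[symmetric]
    by (intro conjI lin dense clos s1 s2 equalityI s3)
qed

end
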